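(* Let $X$ be a $d$-space such that ${\downarrow}(C\cap K)$ is closed for every nonempty closed set $C\neq X$ and every $K\in K(X)$. Then $X$ is $S^{\ast}$-well-filtered.
   Context: All spaces are $T_0$. The specialization order of $X$ is given by $x\le y$ iff $x\in cl(\{y\})$; ${\uparrow},{\downarrow}$ are taken with respect to it; a subset is saturated if it is an upper set in the specialization order. A $d$-space is a $T_0$-space that is a dcpo in its specialization order and whose open sets are all Scott open with respect to that order. $K(X)$ denotes the set of all nonempty compact saturated subsets of $X$; a family in $K(X)$ is filtered if any two members contain a common member. $X$ is $S^{\ast}$-well-filtered if for every filtered family $\{K_i\mid i\in I\}\subseteq K(X)$, every $G\in K(X)$ and every nonempty open $U$, $\bigcap_{i\in I}K_i\cap G\subseteq U$ implies $K_i\cap G\subseteq U$ for some $i$. *)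

theory Defs
  imports "HOL-Analysis.Analysis"
begin

definition spec_le :: "'a topology \<Rightarrow> 'a \<Rightarrow> 'a \<Rightarrow> bool" where
  "spec_le X x y \<longleftrightarrow> x \<in> topspace X \<and> y \<in> topspace X \<and> x \<in> X closure_of {y}"

definition down_set :: "'a topology \<Rightarrow> 'a set \<Rightarrow> 'a set" where
  "down_set X A = {x \<in> topspace X. \<exists>a\<in>A. spec_le X x a}"

definition saturated :: "'a topology \<Rightarrow> 'a set \<Rightarrow> bool" where
  "saturated X A \<longleftrightarrow> A \<subseteq> topspace X \<and> (\<forall>x\<in>A. \<forall>y. spec_le X x y \<longrightarrow> y \<in> A)"

definition KX :: "'a topology \<Rightarrow> 'a set set" where
  "KX X = {K. K \<noteq> {} \<and> compactin X K \<and> saturated X K}"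

definition directed_in :: "'a topology \<Rightarrow> 'a set \<Rightarrow> bool" where
  "directed_in X D \<longleftrightarrow> D \<noteq> {} \<and> D \<subseteq> topspace X \<and>
     (\<forall>a\<in>D. \<forall>b\<in>D. \<exists>c\<in>D. spec_le X a c \<and> spec_le X b c)"

definition is_sup_in :: "'a topology \<Rightarrow> 'a set \<Rightarrow> 'a \<Rightarrow> bool" where
  "is_sup_in X D s \<longleftrightarrow> s \<in> topspace X \<and> (\<forall>d\<in>D. spec_le X d s) \<and>
     (\<forall>u\<in>topspace X. (\<forall>d\<in>D. spec_le X d u) \<longrightarrow> spec_le X s u)"

definition spec_dcpo :: "'a topology \<Rightarrow> bool" where
  "spec_dcpo X \<longleftrightarrow> (\<forall>D. directed_in X D \<longrightarrow> (\<exists>s. is_sup_in X D s))"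

definition scott_open_in :: "'a topology \<Rightarrow> 'a set \<Rightarrow> bool" where
  "scott_open_in X U \<longleftrightarrow> saturated X U \<and>
     (\<forall>D s. directed_in X D \<and> is_sup_in X D s \<and> s \<in> U \<longrightarrow> D \<inter> U \<noteq> {})"

definition d_space :: "'a topology \<Rightarrow> bool" where
  "d_space X \<longleftrightarrow> t0_space X \<and> spec_dcpo X \<and> (\<forall>U. openin X U \<longrightarrow> scott_open_in X U)"

definition filtered_K :: "'a topology \<Rightarrow> 'a set set \<Rightarrow> bool" where
  "filtered_K X \<K> \<longleftrightarrow> \<K> \<noteq> {} \<and> \<K> \<subseteq> KX X \<and>
     (\<forall>K1\<in>\<K>. \<forall>K2\<in>\<K>. \<exists>K3\<in>\<K>. K3 \<subseteq> K1 \<and> K3 \<subseteq> K2)"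

definition S_star_well_filtered :: "'a topology \<Rightarrow> bool" where
  "S_star_well_filtered X \<longleftrightarrow>
     (\<forall>\<K> G U. filtered_K X \<K> \<and> G \<in> KX X \<and> openin X U \<and> U \<noteq> {} \<and> \<Inter>\<K> \<inter> G \<subseteq> U
        \<longrightarrow> (\<exists>K\<in>\<K>. K \<inter> G \<subseteq> U))"

end

theory Submission
  imports Defs
begin

lemma spec_le_open:
  "spec_le X x y \<longleftrightarrow> x \<in> topspace X \<and> y \<in> topspace X \<and> (\<forall>U. openin X U \<and> x \<in> U \<longrightarrow> y \<in> U)"
  unfolding spec_le_def in_closure_of by auto

lemma spec_le_refl: "x \<in> topspace X \<Longrightarrow> spec_le X x x"
  by (simp add: spec_le_open)

lemma spec_le_trans: "spec_le X x y \<Longrightarrow> spec_le X y z \<Longrightarrow> spec_le X x z"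
  by (simp add: spec_le_open)

lemma spec_le_closed: "closedin X C \<Longrightarrow> y \<in> C \<Longrightarrow> spec_le X x y \<Longrightarrow> x \<in> C"
proof -
  assume a: "closedin X C" "y \<in> C" "spec_le X x y"
  have "openin X (topspace X - C)" using a(1) by auto
  then show "x \<in> C" using a(2,3) unfolding spec_le_open by blast
qed

lemma spec_le_openin: "openin X U \<Longrightarrow> x \<in> U \<Longrightarrow> spec_le X x y \<Longrightarrow> y \<in> U"
  unfolding spec_le_open by blast

lemma spec_le_antisym: "t0_space X \<Longrightarrow> spec_le X x y \<Longrightarrow> spec_le X y x \<Longrightarrow> x = y"
proof (rule ccontr)
  assume t0: "t0_space X" and xy: "spec_le X x y" and yx: "spec_le X y x" and ne: "x \<noteq> y"
  have "x \<in> topspace X" "y \<in> topspace X" using xy unfolding spec_le_open by auto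
  then obtain U where U: "openin X U" "x \<notin> U \<longleftrightarrow> y \<in> U" using t0 ne unfolding t0_space_def by blast
  show False
  proof (cases "x \<in> U")
    case True
    then show False using U xy unfolding spec_le_open by blast
  next
    case False
    then show False using U yx unfolding spec_le_open by blast
  qed
qed

lemma closed_sup:
  assumes "d_space X" "closedin X A" "directed_in X D" "D \<subseteq> A" "is_sup_in X D s"
  shows "s \<in> A"
proof (rule ccontr)
  assume "s \<notin> A"
  have "openin X (topspace X - A)" using assms(2) by auto
  then have "scott_open_in X (topspace X - A)" using assms(1) unfolding d_space_def by blast
  moreover have "s \<in> topspace X - A" using \<open>s \<notin> A\<close> assms(5) unfolding is_sup_in_def by auto
  ultimately have "D \<inter> (topspace X - A) \<noteq> {}" using assms(3,5) unfolding scott_open_in_def by blast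
  then show False using assms(4) by blast
qed

lemma max_exists:
  assumes "d_space X" "closedin X A" "a \<in> A"
  shows "\<exists>m\<in>A. spec_le X a m \<and> (\<forall>y\<in>A. spec_le X m y \<longrightarrow> y = m)"
proof -
  define B where "B = {y\<in>A. spec_le X a y}"
  have At: "A \<subseteq> topspace X" using assms(2) closedin_subset by auto
  have t0: "t0_space X" using assms(1) unfolding d_space_def by auto
  have po: "partial_order_on B (relation_of (spec_le X) B)"
  proof (rule partial_order_on_relation_ofI)
    fix p assume "p \<in> B"
    then have "p \<in> topspace X" using At unfolding B_def by auto
    then show "spec_le X p p" by (rule spec_le_refl)
  next
    fix p q r assume "spec_le X p q" "spec_le X q r"
    then show "spec_le X p r" by (rule spec_le_trans)
  next
    fix p q assume "spec_le X p q" "spec_le X q p"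
    then show "p = q" by (rule spec_le_antisym[OF t0])
  qed
  have "\<exists>m \<in> B. \<forall>b \<in> B. spec_le X m b \<longrightarrow> b = m"
  proof (rule predicate_Zorn[OF po])
    fix C assume C: "C \<in> Chains (relation_of (spec_le X) B)"
    show "\<exists>u \<in> B. \<forall>c \<in> C. spec_le X c u"
    proof (cases "C = {}")
      case True
      then show ?thesis using assms(3) At spec_le_refl[of a X] unfolding B_def by blast
    next
      case False
      have CB: "C \<subseteq> B" using C unfolding Chains_def relation_of_def by auto
      have dir: "directed_in X C"
        unfolding directed_in_def
      proof (intro conjI ballI)
        show "C \<noteq> {}" by fact
        show "C \<subseteq> topspace X" using CB At unfolding B_def by auto
      next
        fix p q assume pq: "p \<in> C" "q \<in> C"
        then have "spec_le X p q \<or> spec_le X q p" using C unfolding Chains_def relation_of_def by auto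
        then show "\<exists>c\<in>C. spec_le X p c \<and> spec_le X q c"
        proof -
          have "p \<in> topspace X" "q \<in> topspace X" using pq CB At unfolding B_def by auto
          then have "spec_le X p p" "spec_le X q q" by (simp_all add: spec_le_refl)
          then show ?thesis using pq \<open>spec_le X p q \<or> spec_le X q p\<close> by blast
        qed
      qed
      then obtain s where s: "is_sup_in X C s" using assms(1) unfolding d_space_def spec_dcpo_def by blast
      have "s \<in> A" using closed_sup[OF assms(1,2) dir _ s] CB unfolding B_def by auto
      moreover obtain c where "c \<in> C" using False by auto
      moreover have "spec_le X c s" using s \<open>c \<in> C\<close> unfolding is_sup_in_def by auto
      moreover have "spec_le X a c" using CB \<open>c \<in> C\<close> unfolding B_def by auto
      ultimately have "s \<in> B" using spec_le_trans[of X a c s] unfolding B_def by blast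
      then show ?thesis using s unfolding is_sup_in_def by auto
    qed
  qed
  then obtain m where m: "m \<in> B" "\<forall>b \<in> B. spec_le X m b \<longrightarrow> b = m" by blast
  show ?thesis
  proof (intro bexI conjI ballI impI)
    show "m \<in> A" "spec_le X a m" using m unfolding B_def by auto
    fix y assume "y \<in> A" "spec_le X m y"
    moreover have "spec_le X a m" using m unfolding B_def by auto
    ultimately have "y \<in> B" using spec_le_trans[of X a m y] unfolding B_def by blast
    then show "y = m" using m \<open>spec_le X m y\<close> by blast
  qed
qed


theorem mainTheorem11:
  fixes X :: "'a topology"
  assumes "d_space X"
    and "\<And>C K. closedin X C \<Longrightarrow> C \<noteq> {} \<Longrightarrow> C \<noteq> topspace X \<Longrightarrow> K \<in> KX X
           \<Longrightarrow> closedin X (down_set X (C \<inter> K))"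
  shows "S_star_well_filtered X"
  unfolding S_star_well_filtered_def
proof (intro allI impI)
  fix KK G U
  assume H: "filtered_K X KK \<and> G \<in> KX X \<and> openin X U \<and> U \<noteq> {} \<and> \<Inter>KK \<inter> G \<subseteq> U"
  have fil: "KK \<noteq> {}" "KK \<subseteq> KX X" "\<And>K1 K2. K1 \<in> KK \<Longrightarrow> K2 \<in> KK \<Longrightarrow> \<exists>K3\<in>KK. K3 \<subseteq> K1 \<and> K3 \<subseteq> K2"
    using H unfolding filtered_K_def by auto
  have G: "G \<in> KX X" and U: "openin X U" "U \<noteq> {}" and sub: "\<Inter>KK \<inter> G \<subseteq> U" using H by auto
  have Ksat: "\<And>K. K \<in> KK \<Longrightarrow> saturated X K" and Kcomp: "\<And>K. K \<in> KK \<Longrightarrow> compactin X K"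
    and Kne: "\<And>K. K \<in> KK \<Longrightarrow> K \<noteq> {}"
    using fil(2) unfolding KX_def by auto
  have Gsat: "saturated X G" using G unfolding KX_def by auto
  show "\<exists>K\<in>KK. K \<inter> G \<subseteq> U"
  proof (rule ccontr)
    assume "\<not> (\<exists>K\<in>KK. K \<inter> G \<subseteq> U)"
    then have nsub: "\<And>K. K \<in> KK \<Longrightarrow> \<not> K \<inter> G \<subseteq> U" by auto
    define C where "C = topspace X - U"
    have Ccl: "closedin X C" using U unfolding C_def by auto
    obtain K0 where K0: "K0 \<in> KK" using fil(1) by auto
    have K0top: "K0 \<subseteq> topspace X" using Ksat[OF K0] unfolding saturated_def by auto
    have Cne: "C \<noteq> {}" using nsub[OF K0] K0top unfolding C_def by auto
    have Cnt: "C \<noteq> topspace X" using U openin_subset[OF U(1)] unfolding C_def by auto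
    define C' where "C' = down_set X (C \<inter> G)"
    have C'cl: "closedin X C'" unfolding C'_def using assms(2)[OF Ccl Cne Cnt G] .
    have meetC': "\<And>K. K \<in> KK \<Longrightarrow> K \<inter> C' \<noteq> {}"
    proof -
      fix K assume K: "K \<in> KK"
      obtain x where x: "x \<in> K" "x \<in> G" "x \<notin> U" using nsub[OF K] by auto
      have "x \<in> topspace X" using Ksat[OF K] x unfolding saturated_def by auto
      then have "x \<in> C'" unfolding C'_def down_set_def C_def using x spec_le_refl[of x X] by auto
      then show "K \<inter> C' \<noteq> {}" using x by auto
    qed
    have upC': "\<And>m. m \<in> C' \<Longrightarrow> \<exists>c. c \<in> C \<and> c \<in> G \<and> spec_le X m c"
      unfolding C'_def down_set_def by auto
    have C'nt: "C' \<noteq> topspace X"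
    proof
      assume eq: "C' = topspace X"
      obtain u where u: "u \<in> U" using U by auto
      have "u \<in> topspace X" using u openin_subset[OF U(1)] by auto
      then obtain m where m: "m \<in> topspace X" "spec_le X u m" "\<forall>y\<in>topspace X. spec_le X m y \<longrightarrow> y = m"
        using max_exists[OF assms(1) closedin_topspace] by blast
      have "m \<in> U" using spec_le_openin[OF U(1) u m(2)] .
      obtain c where c: "c \<in> C" "spec_le X m c" using upC' m(1) eq by blast
      have "c \<in> topspace X" using c(2) unfolding spec_le_def by simp
      then have "c = m" using m(3) c(2) by blast
      then show False using c(1) \<open>m \<in> U\<close> unfolding C_def by auto
    qed
    define Opens where "Opens = {V. openin X V \<and> topspace X - C' \<subseteq> V \<and> (\<forall>K\<in>KK. \<not> K \<subseteq> V)}"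
    have "\<exists>M\<in>Opens. \<forall>V\<in>Opens. M \<subseteq> V \<longrightarrow> V = M"
    proof (rule subset_Zorn)
      fix CH assume ch: "subset.chain Opens CH"
      show "\<exists>W\<in>Opens. \<forall>V\<in>CH. V \<subseteq> W"
      proof (cases "CH = {}")
        case True
        have "topspace X - C' \<in> Opens" unfolding Opens_def using C'cl meetC' by (auto simp: closedin_def)
        then show ?thesis using True by blast
      next
        case False
        have CHO: "CH \<subseteq> Opens" using ch unfolding subset_chain_def by auto
        have "\<Union>CH \<in> Opens"
          unfolding Opens_def
        proof (intro CollectI conjI ballI)
          show "openin X (\<Union>CH)" using CHO unfolding Opens_def by auto
          show "topspace X - C' \<subseteq> \<Union>CH" using CHO False unfolding Opens_def by blast
        next
          fix K assume K: "K \<in> KK"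
          show "\<not> K \<subseteq> \<Union>CH"
          proof
            assume Ks: "K \<subseteq> \<Union>CH"
            obtain F where F: "finite F" "F \<subseteq> CH" "K \<subseteq> \<Union>F"
            proof -
              have "\<forall>W\<in>CH. openin X W" using CHO unfolding Opens_def by auto
              then show ?thesis using Kcomp[OF K, unfolded compactin_def] Ks that by blast
            qed
            have Fne: "F \<noteq> {}" using F(3) Kne[OF K] by auto
            have "CH \<subseteq> Opens \<and> (\<forall>X\<in>CH. \<forall>Y\<in>CH. X \<subseteq> Y \<or> Y \<subseteq> X)"
              using ch unfolding subset_chain_def .
            then have "F \<subseteq> Opens \<and> (\<forall>X\<in>F. \<forall>Y\<in>F. X \<subseteq> Y \<or> Y \<subseteq> X)"
              using F(2) by (meson subset_iff)
            then have "subset.chain Opens F" unfolding subset_chain_def .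
            then have "\<Union>F \<in> F" using Union_in_chain[OF F(1) Fne] by blast
            then have "\<Union>F \<in> Opens" using F(2) CHO by auto
            then show False using F(3) K unfolding Opens_def by auto
          qed
        qed
        then show ?thesis by blast
      qed
    qed
    then obtain V where V: "V \<in> Opens" "\<And>W. W \<in> Opens \<Longrightarrow> V \<subseteq> W \<Longrightarrow> W = V" by blast
    define A where "A = topspace X - V"
    have Vo: "openin X V" and VC': "topspace X - C' \<subseteq> V" and VK: "\<And>K. K \<in> KK \<Longrightarrow> \<not> K \<subseteq> V"
      using V(1) unfolding Opens_def by auto
    have Acl: "closedin X A" unfolding A_def using Vo by auto
    have AC': "A \<subseteq> C'" unfolding A_def using VC' by auto
    have Ane: "A \<noteq> {}" using VK[OF K0] K0top unfolding A_def by auto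
    have Ant: "A \<noteq> topspace X" using AC' C'nt closedin_subset[OF C'cl] by auto
    have Adown: "\<And>K. K \<in> KK \<Longrightarrow> A = down_set X (A \<inter> K)"
    proof -
      fix K assume K: "K \<in> KK"
      have KX: "K \<in> KX X" using K fil(2) by auto
      define D where "D = down_set X (A \<inter> K)"
      have Dcl: "closedin X D" unfolding D_def using assms(2)[OF Acl Ane Ant KX] .
      have DA: "D \<subseteq> A" unfolding D_def down_set_def using spec_le_closed[OF Acl] by blast
      have "topspace X - D \<in> Opens"
        unfolding Opens_def
      proof (intro CollectI conjI ballI)
        show "openin X (topspace X - D)" using Dcl by auto
        show "topspace X - C' \<subseteq> topspace X - D" using VC' DA unfolding A_def by auto
      next
        fix K' assume K': "K' \<in> KK"
        obtain K3 where K3: "K3 \<in> KK" "K3 \<subseteq> K" "K3 \<subseteq> K'" using fil(3)[OF K K'] by auto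
        obtain x where x: "x \<in> K3" "x \<notin> V" using VK[OF K3(1)] by auto
        have xt: "x \<in> topspace X" using Ksat[OF K3(1)] x unfolding saturated_def by auto
        have "x \<in> D" unfolding D_def down_set_def A_def using x xt K3 spec_le_refl[of x X] by auto
        then show "\<not> K' \<subseteq> topspace X - D" using x K3 by auto
      qed
      moreover have "V \<subseteq> topspace X - D" using DA openin_subset[OF Vo] unfolding A_def by auto
      ultimately have "topspace X - D = V" using V(2) by blast
      moreover have "D \<subseteq> topspace X" using Dcl closedin_subset by auto
      ultimately have "D = A" unfolding A_def by blast
      then show "A = down_set X (A \<inter> K)" unfolding D_def by simp
    qed
    obtain a where a: "a \<in> A" using Ane by auto
    obtain m where m: "m \<in> A" "\<forall>y\<in>A. spec_le X m y \<longrightarrow> y = m"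
      using max_exists[OF assms(1) Acl a] by blast
    have mK: "\<And>K. K \<in> KK \<Longrightarrow> m \<in> K"
    proof -
      fix K assume K: "K \<in> KK"
      have "m \<in> down_set X (A \<inter> K)" using Adown[OF K] m(1) by auto
      then obtain k where "k \<in> A" "k \<in> K" "spec_le X m k" unfolding down_set_def by auto
      then show "m \<in> K" using m(2) by auto
    qed
    obtain c where c: "c \<in> C" "c \<in> G" "spec_le X m c" using upC' m(1) AC' by blast
    have "c \<in> \<Inter>KK"
    proof
      fix K assume K: "K \<in> KK"
      have "\<forall>x\<in>K. \<forall>y. spec_le X x y \<longrightarrow> y \<in> K" using Ksat[OF K] unfolding saturated_def by blast
      then show "c \<in> K" using mK[OF K] c(3) by blast
    qed
    then have "c \<in> U" using sub c(2) by auto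
    then show False using c(1) unfolding C_def by auto
  qed
qed

end
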